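(* Fix integers $n\ge m\ge 0$, $N_T\ge1$, and a nonzero homogeneous polynomial $Q$ of degree $n-m$ in $a^\dagger_1,\dots,a^\dagger_{N_T}$ (a pure $(n-m)$-photon, $N_T$-mode target state). Let $N=\max\{n,N_T+m\}$ and $M=m$, and consider the optimal configuration: input $\prod_{i=1}^n a^\dagger_i|0\rangle$ on $N$ modes and heralding pattern $(1,\dots,1)$ on the last $m$ modes. Equating the coefficients of all monomials in $a^\dagger_1,\dots,a^\dagger_{N-M}$ in the identity $\gamma G=Q$ gives a finite system of polynomial equations $f_1=\dots=f_s=0$ in the unknowns $\gamma$ and $A_{i,j}$ ($1\le i,j\le N$). If this system admits a Nullstellensatz certificate, i.e. polynomials $\beta_1,\dots,\beta_s$ in these unknowns with complex coefficients such that $1=\sum_{i=1}^s\beta_i f_i$, then $Q$ cannot be generated, for any number of modes, from any multi-mode Fock input state containing $n$ photons heralded by any photon-number pattern containing $m$ photons.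
   Context: Heralded linear-optical state generation model. States with a fixed photon number are homogeneous polynomials in commuting variables $a^\dagger_1,\dots,a^\dagger_N$ applied to the vacuum. Given $N$ modes, an arbitrary complex $N\times N$ matrix $A$ (not required to be unitary), and a Fock input $\prod_{i=1}^N\frac{1}{\sqrt{n_i!}}(a^\dagger_{i,\mathrm{in}})^{n_i}|0\rangle$, the output is $F|0\rangle$ with $F=\prod_{i=1}^N\frac{1}{\sqrt{n_i!}}\big(\sum_{j=1}^N A_{i,j}a^\dagger_j\big)^{n_i}$. Heralding the last $M$ modes on the pattern $(m_1,\dots,m_M)$ (entries $\ge0$, zero meaning vacuum), $m=\sum_j m_j$, gives $G=\frac{1}{\prod_j m_j!}\,\frac{\partial^{m}F}{\partial(a^\dagger_{N-M+1})^{m_1}\cdots\partial(a^\dagger_N)^{m_M}}\Big|_{a^\dagger_{N-M+1}=\cdots=a^\dagger_N=0}$, a polynomial in $a^\dagger_1,\dots,a^\dagger_{N-M}$. A target $Q$ on $N_T\le N-M$ modes is viewed as a polynomial in $a^\dagger_1,\dots,a^\dagger_{N-M}$ (remaining target-side modes in vacuum). $Q$ can be generated from a given input and heralding pattern if there exist a complex $N\times N$ matrix $A$ and $\gamma\in\mathbb{C}$ with $\gamma G=Q$. *)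

theory Defs
  imports Complex_Main "HOL-Library.Poly_Mapping"
begin

text \<open>Polynomials in commuting variables x_0, x_1, ... (mode creation operators
a^dagger_{i+1} = x_i, 0-indexed) with coefficients in a commutative ring 'a are
represented as finitely supported maps from exponent vectors (monomials) to coefficients.\<close>

type_synonym 'a mpoly = "(nat \<Rightarrow>\<^sub>0 nat) \<Rightarrow>\<^sub>0 'a"

definition mvar :: "nat \<Rightarrow> 'a::comm_semiring_1 mpoly" where
  "mvar i = Poly_Mapping.single (Poly_Mapping.single i 1) 1"

definition mconst :: "'a::comm_semiring_1 \<Rightarrow> 'a mpoly" where
  "mconst c = Poly_Mapping.single 0 c"

definition mdeg :: "(nat \<Rightarrow>\<^sub>0 nat) \<Rightarrow> nat" where
  "mdeg \<alpha> = (\<Sum>i\<in>Poly_Mapping.keys \<alpha>. Poly_Mapping.lookup \<alpha> i)"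

definition mpderiv :: "nat \<Rightarrow> 'a::comm_semiring_1 mpoly \<Rightarrow> 'a mpoly" where
  "mpderiv i p = (\<Sum>\<alpha>\<in>Poly_Mapping.keys p.
      Poly_Mapping.single (\<alpha> - Poly_Mapping.single i 1) (of_nat (Poly_Mapping.lookup \<alpha> i) * Poly_Mapping.lookup p \<alpha>))"

definition mset_zero :: "nat set \<Rightarrow> 'a::comm_semiring_1 mpoly \<Rightarrow> 'a mpoly" where
  "mset_zero S p = (\<Sum>\<alpha>\<in>Poly_Mapping.keys p.
      if (\<forall>i\<in>S. Poly_Mapping.lookup \<alpha> i = 0) then Poly_Mapping.single \<alpha> (Poly_Mapping.lookup p \<alpha>) else 0)"

text \<open>The output polynomial F for N modes, transfer matrix A, Fock input ns
(ns i photons in mode i, i < N).  The coefficient embedding emb maps complex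
scalars into the coefficient ring (identity for complex coefficients).\<close>
definition Fout :: "(complex \<Rightarrow> 'a::comm_semiring_1) \<Rightarrow> nat \<Rightarrow> (nat \<Rightarrow> nat \<Rightarrow> 'a)
    \<Rightarrow> (nat \<Rightarrow> nat) \<Rightarrow> 'a mpoly" where
  "Fout emb N A ns =
     (\<Prod>i<N. mconst (emb (complex_of_real (1 / sqrt (real (fact (ns i))))))
              * (\<Sum>j<N. mconst (A i j) * mvar j) ^ ns i)"

text \<open>Heralding the last M of the N modes on pattern ms (ms j photons in mode N-M+j, j < M):
G = (1 / prod_j ms_j!) * d^m F / (d x_{N-M}^{ms 0} ... d x_{N-1}^{ms (M-1)}) at x_{N-M} = ... = x_{N-1} = 0.\<close>
definition herald :: "(complex \<Rightarrow> 'a::comm_semiring_1) \<Rightarrow> nat \<Rightarrow> nat \<Rightarrow> (nat \<Rightarrow> nat)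
    \<Rightarrow> 'a mpoly \<Rightarrow> 'a mpoly" where
  "herald emb N M ms F =
     mconst (emb (1 / of_nat (\<Prod>j<M. fact (ms j))))
     * mset_zero {N - M..<N}
         (fold (\<lambda>j q. (mpderiv (N - M + j) ^^ ms j) q) [0..<M] F)"

definition Gout :: "(complex \<Rightarrow> 'a::comm_semiring_1) \<Rightarrow> nat \<Rightarrow> nat \<Rightarrow> (nat \<Rightarrow> nat \<Rightarrow> 'a)
    \<Rightarrow> (nat \<Rightarrow> nat) \<Rightarrow> (nat \<Rightarrow> nat) \<Rightarrow> 'a mpoly" where
  "Gout emb N M A ns ms = herald emb N M ms (Fout emb N A ns)"

definition generable :: "nat \<Rightarrow> nat \<Rightarrow> (nat \<Rightarrow> nat) \<Rightarrow> (nat \<Rightarrow> nat) \<Rightarrow> complex mpoly \<Rightarrow> bool" where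
  "generable N M ns ms Q \<longleftrightarrow>
     (\<exists>A :: nat \<Rightarrow> nat \<Rightarrow> complex. \<exists>\<gamma> :: complex. mconst \<gamma> * Gout id N M A ns ms = Q)"

definition homog_target :: "nat \<Rightarrow> nat \<Rightarrow> complex mpoly \<Rightarrow> bool" where
  "homog_target NT d Q \<longleftrightarrow> Q \<noteq> 0 \<and> (\<forall>\<alpha>\<in>Poly_Mapping.keys Q. Poly_Mapping.keys \<alpha> \<subseteq> {..<NT} \<and> mdeg \<alpha> = d)"

text \<open>Symbolic unknowns: polynomial ring over complex in variables y_0 (= gamma) and
y_{1 + i*N + j} (= A_{i,j}, i,j < N).\<close>
type_synonym upoly = "complex mpoly"

definition gamma_var :: upoly where "gamma_var = mvar 0"

definition A_var :: "nat \<Rightarrow> nat \<Rightarrow> nat \<Rightarrow> upoly" where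
  "A_var N i j = mvar (1 + i * N + j)"

text \<open>gamma G - Q as a polynomial in the mode variables whose coefficients are
polynomials in the unknowns gamma, A_{i,j}; for the optimal configuration
(input one photon in each of modes 0..n-1 of N modes, heralding pattern (1,...,1) on the last m modes).\<close>
definition opt_system :: "nat \<Rightarrow> nat \<Rightarrow> nat \<Rightarrow> complex mpoly \<Rightarrow> upoly mpoly" where
  "opt_system N n m Q =
     mconst gamma_var * Gout mconst N m (A_var N) (\<lambda>i. if i < n then 1 else 0) (\<lambda>j. 1)
     - Poly_Mapping.map mconst Q"

definition has_nullstellensatz_cert :: "upoly mpoly \<Rightarrow> bool" where
  "has_nullstellensatz_cert P \<longleftrightarrow>
     (\<exists>\<beta> :: (nat \<Rightarrow>\<^sub>0 nat) \<Rightarrow> upoly. (1::upoly) = (\<Sum>\<alpha>\<in>Poly_Mapping.keys P. \<beta> \<alpha> * Poly_Mapping.lookup P \<alpha>))"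

end

theory Submission
  imports Defs
begin


lemma lookup_map0: "f 0 = 0 \<Longrightarrow> Poly_Mapping.lookup (Poly_Mapping.map f p) k = f (Poly_Mapping.lookup p k)"
  by (transfer) (auto simp: when_def)

lemma lookup_minus_nat: "Poly_Mapping.lookup ((a::'x \<Rightarrow>\<^sub>0 nat) - b) k = Poly_Mapping.lookup a k - Poly_Mapping.lookup b k"
  by transfer simp

lemma pm_decomp: "p = (\<Sum>\<alpha>\<in>Poly_Mapping.keys p. Poly_Mapping.single \<alpha> (Poly_Mapping.lookup p \<alpha>))"
proof (rule poly_mapping_eqI)
  fix k
  show "Poly_Mapping.lookup p k = Poly_Mapping.lookup (\<Sum>\<alpha>\<in>Poly_Mapping.keys p. Poly_Mapping.single \<alpha> (Poly_Mapping.lookup p \<alpha>)) k"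
    by (simp add: lookup_sum lookup_single when_def in_keys_iff)
qed

lemma pm_add_induct:
  fixes p :: "'x \<Rightarrow>\<^sub>0 'b::comm_monoid_add"
  assumes "P 0" "\<And>\<alpha> c. P (Poly_Mapping.single \<alpha> c)" "\<And>p q. P p \<Longrightarrow> P q \<Longrightarrow> P (p + q)"
  shows "P p"
proof -
  have "\<And>A. finite A \<Longrightarrow> P (\<Sum>\<alpha>\<in>A. Poly_Mapping.single \<alpha> (Poly_Mapping.lookup p \<alpha>))"
  proof -
    fix A :: "'x set" assume "finite A"
    then show "P (\<Sum>\<alpha>\<in>A. Poly_Mapping.single \<alpha> (Poly_Mapping.lookup p \<alpha>))"
      by (induction A rule: finite_induct) (auto simp: assms)
  qed
  then show ?thesis by (subst pm_decomp) simp
qed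

definition ishom :: "('a::comm_semiring_1 \<Rightarrow> 'b::comm_semiring_1) \<Rightarrow> bool" where
  "ishom h \<longleftrightarrow> h 0 = 0 \<and> h 1 = 1 \<and> (\<forall>a b. h (a + b) = h a + h b) \<and> (\<forall>a b. h (a * b) = h a * h b)"

lemma ishomD:
  assumes "ishom h"
  shows "h 0 = 0" "h 1 = 1" "h (a + b) = h a + h b" "h (a * b) = h a * h b"
  using assms by (auto simp: ishom_def)

lemma ishom_sum: "ishom h \<Longrightarrow> h (sum f A) = (\<Sum>x\<in>A. h (f x))"
  by (induction A rule: infinite_finite_induct) (auto simp: ishomD)

lemma ishom_prod: "ishom h \<Longrightarrow> h (prod f A) = (\<Prod>x\<in>A. h (f x))"
  by (induction A rule: infinite_finite_induct) (auto simp: ishomD)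

lemma ishom_power: "ishom h \<Longrightarrow> h (a ^ k) = h a ^ k"
  by (induction k) (auto simp: ishomD)

lemma ishom_comp: "ishom f \<Longrightarrow> ishom g \<Longrightarrow> ishom (f \<circ> g)"
  by (simp add: ishom_def)

lemma ishom_id: "ishom id" by (simp add: ishom_def)

lemma ishom_minus:
  fixes h :: "'a::comm_ring_1 \<Rightarrow> 'b::comm_ring_1"
  assumes "ishom h" shows "h (a - b) = h a - h b"
proof -
  have "h a = h (a - b) + h b" using ishomD(3)[OF assms, of "a - b" b] by simp
  then show ?thesis by (simp add: eq_diff_eq)
qed

lemma mconst_add: "mconst (a + b) = mconst a + mconst b"
  by (simp add: mconst_def single_add)
lemma mconst_mult: "mconst (a * b) = mconst a * mconst b"
  by (simp add: mconst_def mult_single)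
lemma mconst_0[simp]: "mconst 0 = 0" by (simp add: mconst_def)
lemma mconst_1[simp]: "mconst 1 = 1" by (simp add: mconst_def)
lemma ishom_mconst: "ishom mconst"
  by (simp add: ishom_def mconst_add mconst_mult)

definition monom :: "(nat \<Rightarrow>\<^sub>0 nat) \<Rightarrow> 'a::comm_semiring_1 mpoly" where
  "monom \<alpha> = (\<Prod>i\<in>Poly_Mapping.keys \<alpha>. mvar i ^ Poly_Mapping.lookup \<alpha> i)"

lemma mvar_power: "mvar i ^ k = Poly_Mapping.single (Poly_Mapping.single i k) 1"
  by (induction k) (auto simp: mvar_def mult_single single_add[symmetric])

lemma prod_singles:
  "finite K \<Longrightarrow> (\<Prod>i\<in>K. Poly_Mapping.single (f i) (1::'a::comm_semiring_1)) = Poly_Mapping.single (\<Sum>i\<in>K. f i) 1"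
  by (induction K rule: finite_induct) (auto simp: mult_single)

lemma monom_single: "monom \<alpha> = Poly_Mapping.single \<alpha> 1"
proof -
  have "monom \<alpha> = Poly_Mapping.single (\<Sum>i\<in>Poly_Mapping.keys \<alpha>. Poly_Mapping.single i (Poly_Mapping.lookup \<alpha> i)) 1"
    unfolding monom_def mvar_power by (rule prod_singles) simp
  then show ?thesis using pm_decomp[of \<alpha>] by simp
qed

lemma single_monom: "Poly_Mapping.single \<alpha> c = mconst c * monom \<alpha>"
  by (simp add: monom_single mconst_def mult_single)

lemma mpoly_induct [case_names const var add mult]:
  fixes P :: "'a::comm_semiring_1 mpoly \<Rightarrow> bool"
  assumes const: "\<And>c. P (mconst c)" and var: "\<And>i. P (mvar i)"
    and add: "\<And>p q. P p \<Longrightarrow> P q \<Longrightarrow> P (p + q)" and mult: "\<And>p q. P p \<Longrightarrow> P q \<Longrightarrow> P (p * q)"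
  shows "P p"
proof (rule pm_add_induct)
  show "P 0" using const[of 0] by simp
  show "P p \<Longrightarrow> P q \<Longrightarrow> P (p + q)" for p q by (rule add)
  fix \<alpha> and c :: 'a
  have pw: "P (x ^ k)" if "P x" for x k
    using that by (induction k) (use const[of 1] mult in auto)
  have "finite K \<Longrightarrow> P (\<Prod>i\<in>K. mvar i ^ Poly_Mapping.lookup \<alpha> i)" for K
    by (induction K rule: finite_induct) (use const[of 1] mult pw var in auto)
  then have "P (monom \<alpha>)" unfolding monom_def by simp
  then show "P (Poly_Mapping.single \<alpha> c)" unfolding single_monom using mult const by blast
qed

definition mmono :: "(nat \<Rightarrow> 'b::comm_semiring_1) \<Rightarrow> (nat \<Rightarrow>\<^sub>0 nat) \<Rightarrow> 'b" where
  "mmono \<sigma> \<alpha> = (\<Prod>i\<in>Poly_Mapping.keys \<alpha>. \<sigma> i ^ Poly_Mapping.lookup \<alpha> i)"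

definition eval2 :: "('a::comm_semiring_1 \<Rightarrow> 'b::comm_semiring_1) \<Rightarrow> (nat \<Rightarrow> 'b) \<Rightarrow> 'a mpoly \<Rightarrow> 'b" where
  "eval2 h \<sigma> p = (\<Sum>\<alpha>\<in>Poly_Mapping.keys p. h (Poly_Mapping.lookup p \<alpha>) * mmono \<sigma> \<alpha>)"

lemma mono_superset: "finite K \<Longrightarrow> Poly_Mapping.keys \<alpha> \<subseteq> K \<Longrightarrow> mmono \<sigma> \<alpha> = (\<Prod>i\<in>K. \<sigma> i ^ Poly_Mapping.lookup \<alpha> i)"
  unfolding mmono_def by (rule prod.mono_neutral_left) (auto simp: in_keys_iff)

lemma mono_add: "mmono \<sigma> (\<alpha> + \<beta>) = mmono \<sigma> \<alpha> * mmono \<sigma> \<beta>"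
proof -
  let ?K = "Poly_Mapping.keys \<alpha> \<union> Poly_Mapping.keys \<beta>"
  have k: "Poly_Mapping.keys (\<alpha> + \<beta>) \<subseteq> ?K" by (rule keys_add)
  have "mmono \<sigma> (\<alpha> + \<beta>) = (\<Prod>i\<in>?K. \<sigma> i ^ Poly_Mapping.lookup (\<alpha> + \<beta>) i)"
    by (rule mono_superset) (use k in auto)
  also have "\<dots> = (\<Prod>i\<in>?K. \<sigma> i ^ Poly_Mapping.lookup \<alpha> i) * (\<Prod>i\<in>?K. \<sigma> i ^ Poly_Mapping.lookup \<beta> i)"
    by (simp add: lookup_add power_add prod.distrib)
  also have "\<dots> = mmono \<sigma> \<alpha> * mmono \<sigma> \<beta>"
    by (subst (1 2) mono_superset) auto
  finally show ?thesis .
qed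

lemma mono_zero[simp]: "mmono \<sigma> 0 = 1" by (simp add: mmono_def)

lemma eval2_single: "ishom h \<Longrightarrow> eval2 h \<sigma> (Poly_Mapping.single \<alpha> c) = h c * mmono \<sigma> \<alpha>"
  by (cases "c = 0") (auto simp: eval2_def ishomD)

lemma eval2_add: "ishom h \<Longrightarrow> eval2 h \<sigma> (p + q) = eval2 h \<sigma> p + eval2 h \<sigma> q"
  unfolding eval2_def
  by (rule setsum_keys_plus_distrib) (auto simp: ishomD distrib_right)

lemma eval2_zero: "eval2 h \<sigma> 0 = 0" by (simp add: eval2_def)

lemma eval2_mult: assumes "ishom h" shows "eval2 h \<sigma> (p * q) = eval2 h \<sigma> p * eval2 h \<sigma> q"
proof (induction p arbitrary: q rule: pm_add_induct)
  case 1 then show ?case by (simp add: eval2_zero)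
next
  case (2 \<alpha> c)
  show ?case
  proof (induction q rule: pm_add_induct)
    case 1 then show ?case by (simp add: eval2_zero)
  next
    case (2 \<beta> d)
    then show ?case using assms
      by (simp add: mult_single eval2_single mono_add ishomD mult_ac)
  next
    case (3 p q) then show ?case using assms by (simp add: distrib_left eval2_add)
  qed
next
  case (3 p1 p2) then show ?case using assms by (simp add: distrib_right eval2_add)
qed

lemma eval2_mconst: "ishom h \<Longrightarrow> eval2 h \<sigma> (mconst c) = h c"
  by (simp add: mconst_def eval2_single)

lemma eval2_one: "ishom h \<Longrightarrow> eval2 h \<sigma> 1 = 1"
  using eval2_mconst[of h \<sigma> 1] by (simp add: ishomD)

lemma eval2_mvar: "ishom h \<Longrightarrow> eval2 h \<sigma> (mvar i) = \<sigma> i"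
  by (simp add: mvar_def eval2_single ishomD mmono_def)

lemma ishom_eval2: "ishom h \<Longrightarrow> ishom (eval2 h \<sigma>)"
  by (simp add: ishom_def eval2_zero eval2_one eval2_add eval2_mult)

lemma hom_eqI:
  fixes f g :: "'a::comm_semiring_1 mpoly \<Rightarrow> 'b::comm_semiring_1"
  assumes "ishom f" "ishom g" "\<And>c. f (mconst c) = g (mconst c)" "\<And>i. f (mvar i) = g (mvar i)"
  shows "f p = g p"
  by (induction p rule: mpoly_induct) (use assms in \<open>auto simp: ishomD\<close>)



lemma mpderiv_single: "mpderiv i (Poly_Mapping.single \<alpha> c) =
   Poly_Mapping.single (\<alpha> - Poly_Mapping.single i 1) (of_nat (Poly_Mapping.lookup \<alpha> i) * c)"
  by (cases "c = 0") (auto simp: mpderiv_def)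

lemma mpderiv_add: "mpderiv i (p + q) = mpderiv i p + mpderiv i q"
  unfolding mpderiv_def
  by (rule setsum_keys_plus_distrib) (auto simp: distrib_left single_add)

lemma mpderiv_zero[simp]: "mpderiv i 0 = 0" by (simp add: mpderiv_def)

lemma mpderiv_mult: "mpderiv i (p * q) = mpderiv i p * q + p * mpderiv i q"
proof (induction p arbitrary: q rule: pm_add_induct)
  case 1 then show ?case by simp
next
  case (2 \<alpha> a)
  show ?case
  proof (induction q rule: pm_add_induct)
    case 1 then show ?case by simp
  next
    case (2 \<beta> b)
    let ?e = "Poly_Mapping.single i (1::nat)"
    have L: "mpderiv i (Poly_Mapping.single \<alpha> a * Poly_Mapping.single \<beta> b) =
       Poly_Mapping.single (\<alpha> + \<beta> - ?e) (of_nat (Poly_Mapping.lookup \<alpha> i) * (a * b))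
       + Poly_Mapping.single (\<alpha> + \<beta> - ?e) (of_nat (Poly_Mapping.lookup \<beta> i) * (a * b))"
      by (simp add: mult_single mpderiv_single lookup_add single_add[symmetric] distrib_right)
    have 1: "Poly_Mapping.single (\<alpha> - ?e) (of_nat (Poly_Mapping.lookup \<alpha> i) * a) * Poly_Mapping.single \<beta> b
       = Poly_Mapping.single (\<alpha> + \<beta> - ?e) (of_nat (Poly_Mapping.lookup \<alpha> i) * (a * b))"
    proof (cases "Poly_Mapping.lookup \<alpha> i = 0")
      case True then show ?thesis by simp
    next
      case False
      have "\<alpha> - ?e + \<beta> = \<alpha> + \<beta> - ?e"
        by (rule poly_mapping_eqI) (use False in \<open>auto simp: lookup_add lookup_minus_nat lookup_single when_def\<close>)
      then show ?thesis unfolding mult_single by (simp add: mult_ac)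
    qed
    have 2: "Poly_Mapping.single \<alpha> a * Poly_Mapping.single (\<beta> - ?e) (of_nat (Poly_Mapping.lookup \<beta> i) * b)
       = Poly_Mapping.single (\<alpha> + \<beta> - ?e) (of_nat (Poly_Mapping.lookup \<beta> i) * (a * b))"
    proof (cases "Poly_Mapping.lookup \<beta> i = 0")
      case True then show ?thesis by simp
    next
      case False
      have "\<alpha> + (\<beta> - ?e) = \<alpha> + \<beta> - ?e"
        by (rule poly_mapping_eqI) (use False in \<open>auto simp: lookup_add lookup_minus_nat lookup_single when_def\<close>)
      then show ?thesis unfolding mult_single by (simp add: mult_ac)
    qed
    show ?case by (simp only: L mpderiv_single 1 2)
  next
    case (3 p q) then show ?case by (simp add: distrib_left mpderiv_add algebra_simps)
  qed
next
  case (3 p1 p2) show ?case using 3(1)[of q] 3(2)[of q] by (simp add: distrib_right mpderiv_add algebra_simps)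
qed

lemma mpderiv_mconst[simp]: "mpderiv i (mconst c) = 0"
  by (simp add: mconst_def mpderiv_single)

lemma mpderiv_mvar: "mpderiv i (mvar j) = (if i = j then 1 else 0)"
  by (auto simp: mvar_def mpderiv_single lookup_single)

lemma mpderiv_sum: "mpderiv i (sum f A) = (\<Sum>x\<in>A. mpderiv i (f x))"
  by (induction A rule: infinite_finite_induct) (auto simp: mpderiv_add)

lemma mpderiv_const_mult: "mpderiv i (mconst c * p) = mconst c * mpderiv i p"
  by (simp add: mpderiv_mult)

definition zsub :: "nat set \<Rightarrow> nat \<Rightarrow> 'a::comm_semiring_1 mpoly" where
  "zsub S i = (if i \<in> S then 0 else mvar i)"

lemma mset_zero_single: "mset_zero S (Poly_Mapping.single \<alpha> c) =
  (if (\<forall>i\<in>S. Poly_Mapping.lookup \<alpha> i = 0) then Poly_Mapping.single \<alpha> c else 0)"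
proof (cases "c = 0")
  case False
  then show ?thesis by (simp only: mset_zero_def keys_single) simp
qed (simp add: mset_zero_def)

lemma mset_zero_add: "mset_zero S (p + q) = mset_zero S p + mset_zero S q"
  unfolding mset_zero_def
  by (rule setsum_keys_plus_distrib) (auto simp: single_add)

lemma mset_zero_eval2:
  fixes p :: "'a::comm_semiring_1 mpoly"
  shows "mset_zero S p = eval2 mconst (zsub S) p"
proof (induction p rule: pm_add_induct)
  case 1 then show ?case by (simp add: mset_zero_def eval2_zero)
next
  case (2 \<alpha> c)
  show ?case
  proof (cases "\<forall>i\<in>S. Poly_Mapping.lookup \<alpha> i = 0")
    case True
    have mo: "mmono (zsub S :: nat \<Rightarrow> 'a mpoly) \<alpha> = monom \<alpha>"
      unfolding mmono_def monom_def
      by (rule prod.cong) (use True in \<open>auto simp: zsub_def in_keys_iff\<close>)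
    have "eval2 mconst (zsub S) (Poly_Mapping.single \<alpha> c) = Poly_Mapping.single \<alpha> c"
      by (simp add: eval2_single ishom_mconst mo single_monom[symmetric])
    then show ?thesis using True by (simp add: mset_zero_single)
  next
    case False
    then obtain i where i: "i \<in> S" "Poly_Mapping.lookup \<alpha> i \<noteq> 0" by blast
    have "mmono (zsub S :: nat \<Rightarrow> 'a mpoly) \<alpha> = 0"
      unfolding mmono_def
      by (rule prod_zero) (use i in \<open>auto simp: zsub_def in_keys_iff zero_power intro!: bexI[of _ i]\<close>)
    then show ?thesis using False
      by (auto simp add: mset_zero_single eval2_single ishom_mconst)
  qed
next
  case (3 p q) then show ?case by (simp add: mset_zero_add eval2_add ishom_mconst)
qed

lemma ishom_mset_zero: "ishom (mset_zero S)"
  unfolding mset_zero_eval2[abs_def] by (rule ishom_eval2[OF ishom_mconst])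

lemma map_zero0: "h 0 = 0 \<Longrightarrow> Poly_Mapping.map h 0 = 0"
  by (rule poly_mapping_eqI) (simp add: lookup_map0)

lemma map_eval2: assumes "ishom h"
  shows "Poly_Mapping.map h p = eval2 (mconst \<circ> h) mvar p"
proof (induction p rule: pm_add_induct)
  case 1 then show ?case using assms by (simp add: eval2_zero ishomD map_zero0)
next
  case (2 \<alpha> c)
  have hm: "ishom (mconst \<circ> h)" using assms by (simp add: ishom_def mconst_add mconst_mult)
  have mo: "mmono mvar \<alpha> = monom \<alpha>" by (simp add: mmono_def monom_def)
  have hm': "ishom (\<lambda>a. mconst (h a))" using hm by (simp add: o_def)
  show ?case using assms hm' by (simp add: eval2_single ishomD mo single_monom[symmetric] o_def)
next
  case (3 p q)
  have hm: "ishom (mconst \<circ> h)" using assms by (simp add: ishom_def mconst_add mconst_mult)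
  have "Poly_Mapping.map h (p + q) = Poly_Mapping.map h p + Poly_Mapping.map h q"
    by (rule poly_mapping_eqI) (simp add: lookup_map0 assms ishomD lookup_add)
  have hm': "ishom (\<lambda>a. mconst (h a))" using hm by (simp add: o_def)
  then show ?case using 3 hm' \<open>Poly_Mapping.map h (p + q) = _\<close> by (simp add: eval2_add o_def)
qed

lemma ishom_map: "ishom h \<Longrightarrow> ishom (Poly_Mapping.map h :: 'a::comm_semiring_1 mpoly \<Rightarrow> 'b::comm_semiring_1 mpoly)"
proof -
  assume h: "ishom h"
  have hm: "ishom (mconst \<circ> h)" using h by (simp add: ishom_def mconst_add mconst_mult)
  have "Poly_Mapping.map h = (eval2 (mconst \<circ> h) mvar :: 'a mpoly \<Rightarrow> 'b mpoly)"
    using map_eval2[OF h] by (rule ext)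
  then show ?thesis using ishom_eval2[OF hm, of mvar] by simp
qed

lemma map_mconst: "ishom h \<Longrightarrow> Poly_Mapping.map h (mconst c) = mconst (h c)"
  by (simp add: mconst_def ishomD)

lemma map_mvar: "ishom h \<Longrightarrow> Poly_Mapping.map h (mvar i) = mvar i"
  by (simp add: mvar_def ishomD)

lemma map_mpderiv: assumes "ishom h"
  shows "Poly_Mapping.map h (mpderiv i p) = mpderiv i (Poly_Mapping.map h p)"
proof (induction p rule: mpoly_induct)
  case (const c) then show ?case using assms by (simp add: map_mconst ishomD(1)[OF ishom_map[OF assms]])
next
  case (var j) then show ?case using assms
    by (simp add: map_mvar mpderiv_mvar ishomD[OF ishom_map[OF assms]])
next
  case (add p q) then show ?case by (simp add: mpderiv_add ishomD[OF ishom_map[OF assms]])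
next
  case (mult p q) then show ?case by (simp add: mpderiv_mult ishomD[OF ishom_map[OF assms]])
qed

lemma map_mset_zero: assumes "ishom h"
  shows "Poly_Mapping.map h (mset_zero S p) = mset_zero S (Poly_Mapping.map h p)"
proof -
  have "(Poly_Mapping.map h \<circ> mset_zero S) p = (mset_zero S \<circ> Poly_Mapping.map h) p"
    by (rule hom_eqI[OF ishom_comp[OF ishom_map[OF assms] ishom_mset_zero] ishom_comp[OF ishom_mset_zero ishom_map[OF assms]]])
      (use assms in \<open>simp_all add: mset_zero_eval2 eval2_mconst eval2_mvar ishom_mconst map_mconst map_mvar zsub_def ishomD[OF ishom_map[OF assms]]\<close>)
  then show ?thesis by simp
qed

lemma chain_rule:
  assumes B: "\<And>k. k \<ge> B \<Longrightarrow> mpderiv r (\<sigma> k) = 0"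
  shows "mpderiv r (eval2 mconst \<sigma> F) = (\<Sum>k<B. eval2 mconst \<sigma> (mpderiv k F) * mpderiv r (\<sigma> k))"
proof (induction F rule: mpoly_induct)
  case (const c) then show ?case by (simp add: eval2_mconst ishom_mconst eval2_zero)
next
  case (var j)
  show ?case
  proof (cases "j < B")
    case True
    have "(\<Sum>k<B. eval2 mconst \<sigma> (mpderiv k (mvar j)) * mpderiv r (\<sigma> k)) =
          (\<Sum>k<B. if k = j then mpderiv r (\<sigma> j) else 0)"
      by (rule sum.cong) (auto simp: mpderiv_mvar eval2_one eval2_zero ishom_mconst)
    then show ?thesis using True by (simp add: eval2_mvar ishom_mconst)
  next
    case False
    have "(\<Sum>k<B. eval2 mconst \<sigma> (mpderiv k (mvar j)) * mpderiv r (\<sigma> k)) = 0"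
      by (rule sum.neutral) (use False in \<open>auto simp: mpderiv_mvar eval2_zero\<close>)
    then show ?thesis using False B[of j] by (simp add: eval2_mvar ishom_mconst)
  qed
next
  case (add p q) then show ?case
    by (simp add: eval2_add ishom_mconst mpderiv_add distrib_right sum.distrib)
next
  case (mult p q)
  let ?e = "eval2 mconst \<sigma>"
  have "mpderiv r (?e (p * q)) = mpderiv r (?e p) * ?e q + ?e p * mpderiv r (?e q)"
    by (simp add: eval2_mult ishom_mconst mpderiv_mult)
  also have "\<dots> = (\<Sum>k<B. ?e (mpderiv k p) * mpderiv r (\<sigma> k)) * ?e q + ?e p * (\<Sum>k<B. ?e (mpderiv k q) * mpderiv r (\<sigma> k))"
    using mult.IH by simp
  also have "\<dots> = (\<Sum>k<B. ?e (mpderiv k p) * mpderiv r (\<sigma> k) * ?e q) + (\<Sum>k<B. ?e p * (?e (mpderiv k q) * mpderiv r (\<sigma> k)))"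
    by (simp add: sum_distrib_left sum_distrib_right)
  also have "\<dots> = (\<Sum>k<B. ?e (mpderiv k p) * mpderiv r (\<sigma> k) * ?e q + ?e p * (?e (mpderiv k q) * mpderiv r (\<sigma> k)))"
    by (rule sum.distrib[symmetric])
  also have "\<dots> = (\<Sum>k<B. ?e (mpderiv k (p * q)) * mpderiv r (\<sigma> k))"
    by (rule sum.cong) (simp_all add: mpderiv_mult eval2_add eval2_mult ishom_mconst algebra_simps)
  finally show ?case .
qed



lemma sum_split_add: "(\<Sum>k<a+(b::nat). f k) = (\<Sum>k<a. f k) + (\<Sum>r<b. f (a + r))"
  by (induction b) (simp_all add: add_ac)

lemma prod_split_add: "(\<Prod>k<a+(b::nat). f k) = (\<Prod>k<a. f k) * (\<Prod>r<b. f (a + r))"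
  by (induction b) (simp_all add: mult_ac)

lemma fold_funpow_concat:
  "fold (\<lambda>j q. (f (a j) ^^ c j) q) xs F = fold f (concat (map (\<lambda>j. replicate (c j) (a j)) xs)) F"
  by (induction xs arbitrary: F) simp_all

lemma fold_chain:
  assumes "list_all2 (\<lambda>y k. \<forall>G. mpderiv y (S G) = S (mpderiv k G)) ys ks"
  shows "fold mpderiv ys (S F) = S (fold mpderiv ks F)"
  using assms by (induction ys ks arbitrary: F rule: list_all2_induct) simp_all

lemma fold_mpderiv_const: "fold mpderiv ks (mconst c * F) = mconst c * fold mpderiv ks F"
  by (induction ks arbitrary: F) (simp_all add: mpderiv_const_mult)

lemma length_concat_rep: "length (concat (map (\<lambda>j. replicate (c j) (a j)) [0..<M])) = (\<Sum>j<M. c j)"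
  by (simp add: length_concat map_map o_def interv_sum_list_conv_sum_set_nat atLeast0LessThan)

lemma prod_list_concat_rep:
  "prod_list (map L (concat (map (\<lambda>i. replicate (c i) i) xs))) = prod_list (map (\<lambda>i. L i ^ c i) xs)"
  by (induction xs) (simp_all)

lemma prod_list_nth: "prod_list (map f xs) = (\<Prod>t<length xs. f (xs ! t))"
  by (induction xs) (simp_all add: prod.lessThan_Suc_shift del: prod.lessThan_Suc)

lemma prod_upt: "prod_list (map g [0..<M]) = (\<Prod>i<M. g i)"
  by (simp add: prod.distinct_set_conv_list[symmetric] atLeast0LessThan)

lemma eval2_sum: "ishom h \<Longrightarrow> eval2 h \<sigma> (sum f A) = (\<Sum>x\<in>A. eval2 h \<sigma> (f x))"
  by (rule ishom_sum[OF ishom_eval2])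
lemma eval2_prod: "ishom h \<Longrightarrow> eval2 h \<sigma> (prod f A) = (\<Prod>x\<in>A. eval2 h \<sigma> (f x))"
  by (rule ishom_prod[OF ishom_eval2])
lemma eval2_power: "ishom h \<Longrightarrow> eval2 h \<sigma> (p ^ k) = eval2 h \<sigma> p ^ k"
  by (rule ishom_power[OF ishom_eval2])

lemma eval2_fix:
  assumes "\<forall>\<alpha>\<in>Poly_Mapping.keys Q. Poly_Mapping.keys \<alpha> \<subseteq> K"
    and "\<And>i. i \<in> K \<Longrightarrow> \<sigma> i = mvar i"
  shows "eval2 mconst \<sigma> Q = Q"
proof -
  have "eval2 mconst \<sigma> Q = (\<Sum>\<alpha>\<in>Poly_Mapping.keys Q. eval2 mconst \<sigma> (Poly_Mapping.single \<alpha> (Poly_Mapping.lookup Q \<alpha>)))"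
    by (subst pm_decomp[of Q]) (simp only: eval2_sum[OF ishom_mconst])
  also have "\<dots> = (\<Sum>\<alpha>\<in>Poly_Mapping.keys Q. Poly_Mapping.single \<alpha> (Poly_Mapping.lookup Q \<alpha>))"
  proof (rule sum.cong)
    fix \<alpha> assume a: "\<alpha> \<in> Poly_Mapping.keys Q"
    have "mmono \<sigma> \<alpha> = monom \<alpha>" unfolding mmono_def monom_def
    proof (rule prod.cong)
      fix x assume "x \<in> Poly_Mapping.keys \<alpha>"
      then have "x \<in> K" using a assms(1) by blast
      then show "\<sigma> x ^ Poly_Mapping.lookup \<alpha> x = mvar x ^ Poly_Mapping.lookup \<alpha> x" using assms(2) by simp
    qed simp
    then show "eval2 mconst \<sigma> (Poly_Mapping.single \<alpha> (Poly_Mapping.lookup Q \<alpha>)) = Poly_Mapping.single \<alpha> (Poly_Mapping.lookup Q \<alpha>)"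
      by (simp add: eval2_single ishom_mconst single_monom[symmetric])
  qed simp
  also have "\<dots> = Q" by (rule pm_decomp[symmetric])
  finally show ?thesis .
qed



lemma fold_funpow1: "fold (\<lambda>j q. (f (a j) ^^ 1) q) xs X = fold f (map a xs) X"
  by (induction xs arbitrary: X) simp_all

lemma simulate:
  fixes N' M' :: nat and ns ms :: "nat \<Rightarrow> nat" and A :: "nat \<Rightarrow> nat \<Rightarrow> complex"
    and \<gamma> :: complex and Q :: "complex mpoly"
  assumes MN: "M' \<le> N'" and NTle: "NT \<le> N' - M'" and sn: "(\<Sum>i<N'. ns i) = n" and sm: "(\<Sum>j<M'. ms j) = m"
    and gen: "mconst \<gamma> * Gout id N' M' A ns ms = Q"
    and keysQ: "\<forall>\<alpha>\<in>Poly_Mapping.keys Q. Poly_Mapping.keys \<alpha> \<subseteq> {..<NT}"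
  shows "\<exists>A' \<gamma>'. mconst \<gamma>' * Gout id (max n (NT + m)) m A' (\<lambda>i. if i < n then 1 else 0) (\<lambda>j. 1) = Q"
proof -
  define N where "N = max n (NT + m)"
  define b where "b = N' - M'"
  define ks where "ks = concat (map (\<lambda>j. replicate (ms j) (b + j)) [0..<M'])"
  define ps where "ps = concat (map (\<lambda>i. replicate (ns i) i) [0..<N'])"
  define L where "L i = (\<Sum>j<N'. mconst (A i j) * mvar j)" for i
  define I where "I k = {r. r < m \<and> ks ! r = k}" for k
  define \<tau> where "\<tau> k = (if k < NT then mvar k else (0::complex mpoly))" for k
  define \<sigma> where "\<sigma> k = \<tau> k + (\<Sum>r\<in>I k. mvar (N - m + r))" for k
  define A' where "A' t k = (if k < NT then A (ps ! t) k else if N - m \<le> k \<and> k < N then A (ps ! t) (ks ! (k - (N - m))) else 0)" for t k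
  have lks: "length ks = m" using sm by (simp add: ks_def length_concat_rep)
  have lps: "length ps = n" using sn by (simp add: ps_def length_concat_rep)
  have ksr: "b \<le> ks ! r \<and> ks ! r < N'" if "r < m" for r
  proof -
    have "ks ! r \<in> set ks" using that lks by simp
    then show ?thesis using MN by (auto simp: ks_def b_def)
  qed
  have psr: "ps ! t < N'" if "t < n" for t
  proof -
    have "ps ! t \<in> set ps" using that lps by simp
    then show ?thesis by (auto simp: ps_def)
  qed
  have NTb: "NT \<le> b" using NTle b_def by simp
  have Nm: "NT + m \<le> N" "n \<le> N" by (auto simp: N_def)
  have finI: "finite (I k)" for k by (simp add: I_def)
  let ?S = "eval2 mconst \<sigma>"
  have lin: "(\<Sum>k<N. mconst (A' t k) * mvar k) = ?S (L (ps ! t))" if t: "t < n" for t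
  proof -
    let ?i = "ps ! t"
    have "?S (L ?i) = (\<Sum>j<N'. mconst (A ?i j) * \<sigma> j)"
      by (simp add: L_def eval2_sum eval2_mult eval2_mconst eval2_mvar ishom_mconst)
    also have "\<dots> = (\<Sum>j<N'. mconst (A ?i j) * \<tau> j) + (\<Sum>j<N'. mconst (A ?i j) * (\<Sum>r\<in>I j. mvar (N - m + r)))"
      by (simp add: \<sigma>_def distrib_left sum.distrib)
    also have "(\<Sum>j<N'. mconst (A ?i j) * \<tau> j) = (\<Sum>j<NT. mconst (A ?i j) * mvar j)"
    proof -
      have "N' = NT + (N' - NT)" using NTle by simp
      then have "(\<Sum>j<N'. mconst (A ?i j) * \<tau> j) = (\<Sum>j<NT + (N' - NT). mconst (A ?i j) * \<tau> j)" by simp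
      also have "\<dots> = (\<Sum>j<NT. mconst (A ?i j) * mvar j)" by (simp add: sum_split_add \<tau>_def)
      finally show ?thesis .
    qed
    also have "(\<Sum>j<N'. mconst (A ?i j) * (\<Sum>r\<in>I j. mvar (N - m + r))) = (\<Sum>r<m. mconst (A ?i (ks ! r)) * mvar (N - m + r))"
    proof -
      have "(\<Sum>j<N'. mconst (A ?i j) * (\<Sum>r\<in>I j. mvar (N - m + r))) =
            (\<Sum>j<N'. \<Sum>r\<in>{r. r \<in> {..<m} \<and> ks ! r = j}. mconst (A ?i (ks ! r)) * mvar (N - m + r))"
        by (rule sum.cong) (auto simp: I_def sum_distrib_left intro!: sum.cong)
      also have "\<dots> = (\<Sum>r<m. mconst (A ?i (ks ! r)) * mvar (N - m + r))"
        by (rule sum.group) (use ksr in auto)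
      finally show ?thesis .
    qed
    also have "(\<Sum>k<N. mconst (A' t k) * mvar k) = (\<Sum>j<NT. mconst (A ?i j) * mvar j) + (\<Sum>r<m. mconst (A ?i (ks ! r)) * mvar (N - m + r))"
    proof -
      have e: "N = NT + (N - m - NT) + m" using Nm by simp
      have "(\<Sum>k<N. mconst (A' t k) * mvar k) = (\<Sum>k<NT + (N - m - NT) + m. mconst (A' t k) * mvar k)" using e by simp
      also have "\<dots> = (\<Sum>k<NT. mconst (A' t k) * mvar k) + (\<Sum>r<N - m - NT. mconst (A' t (NT + r)) * mvar (NT + r))
          + (\<Sum>r<m. mconst (A' t (NT + (N - m - NT) + r)) * mvar (NT + (N - m - NT) + r))"
        by (simp only: sum_split_add)
      also have "(\<Sum>k<NT. mconst (A' t k) * mvar k) = (\<Sum>j<NT. mconst (A ?i j) * mvar j)"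
        by (rule sum.cong) (auto simp: A'_def)
      also have "(\<Sum>r<N - m - NT. mconst (A' t (NT + r)) * mvar (NT + r)) = 0"
        by (rule sum.neutral) (auto simp: A'_def)
      also have "(\<Sum>r<m. mconst (A' t (NT + (N - m - NT) + r)) * mvar (NT + (N - m - NT) + r)) = (\<Sum>r<m. mconst (A ?i (ks ! r)) * mvar (N - m + r))"
        by (rule sum.cong) (use Nm in \<open>auto simp: A'_def\<close>)
      finally show ?thesis by simp
    qed
    finally show ?thesis by simp
  qed
  define P where "P = (\<Prod>i<N'. L i ^ ns i)"
  define C where "C = (\<Prod>i<N'. complex_of_real (1 / sqrt (real (fact (ns i)))))"
  have F': "Fout id N' A ns = mconst C * P"
    unfolding Fout_def P_def C_def L_def by (simp add: prod.distrib ishom_prod[OF ishom_mconst])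
  have Pps: "P = (\<Prod>t<n. L (ps ! t))"
  proof -
    have "P = prod_list (map (\<lambda>i. L i ^ ns i) [0..<N'])" by (simp add: P_def prod_upt)
    also have "\<dots> = prod_list (map L ps)" by (simp add: ps_def prod_list_concat_rep)
    also have "\<dots> = (\<Prod>t<n. L (ps ! t))" by (simp add: prod_list_nth lps)
    finally show ?thesis .
  qed
  have Fopt: "Fout id N A' (\<lambda>i. if i < n then 1 else 0) = ?S P"
  proof -
    have "Fout id N A' (\<lambda>i. if i < n then 1 else 0) = (\<Prod>i<N. if i < n then (\<Sum>k<N. mconst (A' i k) * mvar k) else 1)"
      unfolding Fout_def by (rule prod.cong) auto
    also have "\<dots> = (\<Prod>i<n + (N - n). if i < n then (\<Sum>k<N. mconst (A' i k) * mvar k) else 1)"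
      using Nm by simp
    also have "\<dots> = (\<Prod>i<n. (\<Sum>k<N. mconst (A' i k) * mvar k))"
      by (simp only: prod_split_add) simp
    also have "\<dots> = (\<Prod>t<n. ?S (L (ps ! t)))"
      by (rule prod.cong) (simp_all add: lin)
    also have "\<dots> = ?S P" by (simp add: Pps eval2_prod ishom_mconst)
    finally show ?thesis .
  qed
  have d\<sigma>: "mpderiv (N - m + r) (\<sigma> k) = (if k = ks ! r then 1 else 0)" if r: "r < m" for r k
  proof -
    have "mpderiv (N - m + r) (\<tau> k) = 0" using Nm by (auto simp: \<tau>_def mpderiv_mvar)
    moreover have "mpderiv (N - m + r) (\<Sum>r'\<in>I k. mvar (N - m + r')) = (if k = ks ! r then 1 else 0)"
      using r finI[of k] by (simp add: mpderiv_sum mpderiv_mvar I_def)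
    ultimately show ?thesis by (simp add: \<sigma>_def mpderiv_add)
  qed
  have chain1: "mpderiv (N - m + r) (?S G) = ?S (mpderiv (ks ! r) G)" if r: "r < m" for r G
  proof -
    have "mpderiv (N - m + r) (?S G) = (\<Sum>k<N'. ?S (mpderiv k G) * mpderiv (N - m + r) (\<sigma> k))"
      by (rule chain_rule) (use ksr[OF r] d\<sigma>[OF r] in auto)
    also have "\<dots> = (\<Sum>k<N'. if k = ks ! r then ?S (mpderiv k G) else 0)"
      by (rule sum.cong) (simp_all add: d\<sigma>[OF r])
    also have "\<dots> = ?S (mpderiv (ks ! r) G)" using ksr[OF r] by simp
    finally show ?thesis .
  qed
  define ys where "ys = map (\<lambda>j. N - m + j) [0..<m]"
  have chainL: "fold mpderiv ys (?S X) = ?S (fold mpderiv ks X)" for X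
  proof (rule fold_chain)
    show "list_all2 (\<lambda>y k. \<forall>G. mpderiv y (?S G) = ?S (mpderiv k G)) ys ks"
      unfolding list_all2_conv_all_nth using lks chain1 by (simp add: ys_def)
  qed
  have comp: "mset_zero {N - m..<N} (?S X) = eval2 mconst \<tau> (mset_zero {N' - M'..<N'} X)" for X
  proof -
    have "(mset_zero {N - m..<N} \<circ> ?S) X = (eval2 mconst \<tau> \<circ> mset_zero {N' - M'..<N'}) X"
    proof (rule hom_eqI[OF ishom_comp[OF ishom_mset_zero ishom_eval2[OF ishom_mconst]]
          ishom_comp[OF ishom_eval2[OF ishom_mconst] ishom_mset_zero]])
      fix c show "(mset_zero {N - m..<N} \<circ> ?S) (mconst c) = (eval2 mconst \<tau> \<circ> mset_zero {N' - M'..<N'}) (mconst c)"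
        by (simp add: mset_zero_eval2 eval2_mconst ishom_mconst)
    next
      fix k
      have z: "mset_zero S (mvar j) = zsub S j" for S j by (simp add: mset_zero_eval2 eval2_mvar ishom_mconst)
      have "mset_zero {N - m..<N} (\<sigma> k) = mset_zero {N - m..<N} (\<tau> k) + (\<Sum>r\<in>I k. mset_zero {N - m..<N} (mvar (N - m + r)))"
        by (simp add: \<sigma>_def ishomD[OF ishom_mset_zero] ishom_sum[OF ishom_mset_zero])
      also have "(\<Sum>r\<in>I k. mset_zero {N - m..<N} (mvar (N - m + r))) = 0"
        by (rule sum.neutral) (use Nm in \<open>auto simp: z zsub_def I_def\<close>)
      also have "mset_zero {N - m..<N} (\<tau> k) = \<tau> k"
        using Nm by (auto simp: \<tau>_def z zsub_def ishomD[OF ishom_mset_zero])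
      finally have l: "mset_zero {N - m..<N} (\<sigma> k) = \<tau> k" by simp
      have r: "eval2 mconst \<tau> (mset_zero {N' - M'..<N'} (mvar k)) = \<tau> k"
        using NTle by (auto simp: z zsub_def eval2_mvar eval2_zero ishom_mconst \<tau>_def)
      show "(mset_zero {N - m..<N} \<circ> ?S) (mvar k) = (eval2 mconst \<tau> \<circ> mset_zero {N' - M'..<N'}) (mvar k)"
        using l r by (simp add: eval2_mvar ishom_mconst)
    qed
    then show ?thesis by simp
  qed
  define X where "X = fold mpderiv ks P"
  define c1 where "c1 = (1 / of_nat (\<Prod>j<M'. fact (ms j)) :: complex)"
  have msz_const: "mset_zero S (mconst c * Y) = mconst c * mset_zero S Y" for S c Y
    by (simp add: mset_zero_eval2 eval2_mult eval2_mconst ishom_mconst)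
  have Qeq: "Q = mconst (\<gamma> * c1 * C) * mset_zero {N' - M'..<N'} X"
  proof -
    have "Q = mconst \<gamma> * (mconst c1 * mset_zero {N' - M'..<N'} (fold mpderiv ks (mconst C * P)))"
      using gen by (simp add: Gout_def herald_def F' ks_def b_def fold_funpow_concat c1_def)
    also have "\<dots> = mconst (\<gamma> * c1 * C) * mset_zero {N' - M'..<N'} X"
      by (simp only: fold_mpderiv_const msz_const X_def) (simp add: mconst_mult mult_ac)
    finally show ?thesis .
  qed
  have Gopt: "Gout id N m A' (\<lambda>i. if i < n then 1 else 0) (\<lambda>j. 1) = eval2 mconst \<tau> (mset_zero {N' - M'..<N'} X)"
  proof -
    have "Gout id N m A' (\<lambda>i. if i < n then 1 else 0) (\<lambda>j. 1) = mset_zero {N - m..<N} (fold mpderiv ys (?S P))"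
      by (simp add: Gout_def herald_def Fopt ys_def fold_map o_def)
    also have "\<dots> = eval2 mconst \<tau> (mset_zero {N' - M'..<N'} X)"
      by (simp add: chainL comp X_def)
    finally show ?thesis .
  qed
  have TQ: "eval2 mconst \<tau> Q = Q"
    by (rule eval2_fix[OF keysQ]) (simp add: \<tau>_def)
  have "mconst (\<gamma> * c1 * C) * Gout id N m A' (\<lambda>i. if i < n then 1 else 0) (\<lambda>j. 1) = Q"
  proof -
    have "Q = eval2 mconst \<tau> Q" using TQ by simp
    also have "\<dots> = mconst (\<gamma> * c1 * C) * eval2 mconst \<tau> (mset_zero {N' - M'..<N'} X)"
      by (subst Qeq) (simp add: eval2_mult eval2_mconst ishom_mconst)
    finally show ?thesis using Gopt by simp
  qed
  then show ?thesis unfolding N_def by blast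
qed


lemma map_funpow: "ishom h \<Longrightarrow> Poly_Mapping.map h ((mpderiv i ^^ k) F) = (mpderiv i ^^ k) (Poly_Mapping.map h F)"
  by (induction k) (simp_all add: map_mpderiv)

lemma map_fold: "ishom h \<Longrightarrow> Poly_Mapping.map h (fold (\<lambda>j q. (mpderiv (c j) ^^ k j) q) xs F)
   = fold (\<lambda>j q. (mpderiv (c j) ^^ k j) q) xs (Poly_Mapping.map h F)"
  by (induction xs arbitrary: F) (simp_all add: map_funpow)

lemma map_Gout:
  assumes h: "ishom h"
  shows "Poly_Mapping.map h (Gout emb N M Af ns ms) = Gout (h \<circ> emb) N M (\<lambda>i j. h (Af i j)) ns ms"
proof -
  have hm: "ishom (Poly_Mapping.map h :: 'a mpoly \<Rightarrow> 'b mpoly)" by (rule ishom_map[OF h])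
  have "Poly_Mapping.map h (Fout emb N Af ns) = Fout (h \<circ> emb) N (\<lambda>i j. h (Af i j)) ns"
    unfolding Fout_def
    by (simp add: ishom_prod[OF hm] ishom_sum[OF hm] ishom_power[OF hm] ishomD[OF hm] map_mconst[OF h] map_mvar[OF h])
  then show ?thesis
    unfolding Gout_def herald_def
    by (simp add: ishomD[OF hm] map_mconst[OF h] map_mset_zero[OF h] map_fold[OF h])
qed

lemma Gout_cong:
  assumes "\<And>i j. i < N \<Longrightarrow> j < N \<Longrightarrow> Af i j = Bf i j"
  shows "Gout emb N M Af ns ms = Gout emb N M Bf ns ms"
proof -
  have "Fout emb N Af ns = Fout emb N Bf ns"
    unfolding Fout_def by (intro prod.cong refl arg_cong2[where f="(*)"] arg_cong2[where f="(^)"] sum.cong) (simp_all add: assms)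
  then show ?thesis by (simp add: Gout_def)
qed

theorem theorem2:
  fixes n m NT :: nat and Q :: "complex mpoly"
  assumes "m \<le> n" and "NT \<ge> 1"
    and "homog_target NT (n - m) Q"
    and "has_nullstellensatz_cert (opt_system (max n (NT + m)) n m Q)"
  shows "\<forall>N' M' (ns :: nat \<Rightarrow> nat) (ms :: nat \<Rightarrow> nat).
           M' \<le> N' \<longrightarrow> NT \<le> N' - M' \<longrightarrow>
           (\<Sum>i<N'. ns i) = n \<longrightarrow> (\<Sum>j<M'. ms j) = m \<longrightarrow>
           \<not> generable N' M' ns ms Q"
proof (intro allI impI notI)
  fix N' M' :: nat and ns ms :: "nat \<Rightarrow> nat"
  assume MN: "M' \<le> N'" and NTle: "NT \<le> N' - M'" and sn: "(\<Sum>i<N'. ns i) = n"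
    and sm: "(\<Sum>j<M'. ms j) = m" and g: "generable N' M' ns ms Q"
  obtain A \<gamma> where gen: "mconst \<gamma> * Gout id N' M' A ns ms = Q" using g by (auto simp: generable_def)
  have keysQ: "\<forall>\<alpha>\<in>Poly_Mapping.keys Q. Poly_Mapping.keys \<alpha> \<subseteq> {..<NT}"
    using assms(3) by (auto simp: homog_target_def)
  define N where "N = max n (NT + m)"
  obtain A' \<gamma>' where opt: "mconst \<gamma>' * Gout id N m A' (\<lambda>i. if i < n then 1 else 0) (\<lambda>j. 1) = Q"
    using simulate[OF MN NTle sn sm gen keysQ] unfolding N_def by blast
  define P where "P = opt_system N n m Q"
  obtain \<beta> where cert: "(1::upoly) = (\<Sum>\<alpha>\<in>Poly_Mapping.keys P. \<beta> \<alpha> * Poly_Mapping.lookup P \<alpha>)"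
    using assms(4) unfolding has_nullstellensatz_cert_def P_def N_def by blast
  define \<rho> where "\<rho> k = (if k = 0 then \<gamma>' else A' ((k - 1) div N) ((k - 1) mod N))" for k
  define ev where "ev = eval2 (id :: complex \<Rightarrow> complex) \<rho>"
  have evh: "ishom ev" unfolding ev_def by (rule ishom_eval2[OF ishom_id])
  have evc: "ev (mconst c) = c" for c by (simp add: ev_def eval2_mconst ishom_id)
  have mh: "ishom (Poly_Mapping.map ev :: upoly mpoly \<Rightarrow> complex mpoly)" by (rule ishom_map[OF evh])
  have evo: "ev \<circ> mconst = id" by (rule ext) (simp add: evc)
  have evA: "ev (A_var N i j) = A' i j" if "j < N" for i j
    using that by (simp add: ev_def A_var_def eval2_mvar ishom_id \<rho>_def)
  have G: "Poly_Mapping.map ev (Gout mconst N m (A_var N) (\<lambda>i. if i < n then 1 else 0) (\<lambda>j. 1))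
      = Gout id N m A' (\<lambda>i. if i < n then 1 else 0) (\<lambda>j. 1)"
    unfolding map_Gout[OF evh] evo by (rule Gout_cong) (simp add: evA)
  have MQ: "Poly_Mapping.map ev (Poly_Mapping.map mconst Q) = Q"
    by (rule poly_mapping_eqI) (simp add: lookup_map0 evc ishomD[OF evh])
  have gv: "ev gamma_var = \<gamma>'" by (simp add: ev_def gamma_var_def eval2_mvar ishom_id \<rho>_def)
  have MP: "Poly_Mapping.map ev P = 0"
    unfolding P_def opt_system_def ishom_minus[OF mh] ishomD(4)[OF mh] map_mconst[OF evh] G MQ gv opt
    by simp
  have "ev 1 = ev (\<Sum>\<alpha>\<in>Poly_Mapping.keys P. \<beta> \<alpha> * Poly_Mapping.lookup P \<alpha>)" using cert by simp
  also have "\<dots> = (\<Sum>\<alpha>\<in>Poly_Mapping.keys P. ev (\<beta> \<alpha>) * Poly_Mapping.lookup (Poly_Mapping.map ev P) \<alpha>)"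
    by (simp add: ishom_sum[OF evh] ishomD[OF evh] lookup_map0)
  also have "\<dots> = 0" by (simp add: MP)
  finally show False by (simp add: ishomD[OF evh])
qed

end
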